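(* Let $I=(c,d)$ and $J$ be open intervals of $\mathbb{R}$ with $c\in\mathbb{R}$, let $O=I\times J$, and let $L:O\to\mathbb{R}$, $(x,y)\mapsto L(x,y)$, be of class $C^1$. Let $a<b$, $\alpha,\beta\in\mathbb{R}$, and let $X$ be the set of all $\gamma\in C([a,b])$ which are continuously differentiable on $(a,b]$, satisfy $(\gamma(t),\gamma'(t))\in O$ for all $t\in(a,b]$, $\gamma(a)=\alpha$, $\gamma(b)=\beta$, and for which the (possibly improper) integral $\mathcal{L}(\gamma)=\int_a^b L(\gamma(t),\gamma'(t))\,dt$ is defined. Suppose that $L$ is convex (resp. strictly convex) on $O$, that $\frac{\partial L}{\partial y}$ is bounded on $O$, and that $\gamma\in X$ satisfies the Euler–Lagrange equation $$\frac{\partial L}{\partial x}(\gamma(t),\gamma'(t))=\frac{d}{dt}\,\frac{\partial L}{\partial y}(\gamma(t),\gamma'(t))\quad\text{for all } t\in(a,b].$$ Then $\gamma$ is a minimum (resp. the unique minimum) of $\mathcal{L}$ on $X$.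
   Context: $L$ is called convex on $O$ if for all $x\in O$ and $h\in\mathbb{R}^2$ with $x+h\in O$, one has $L(x+h)-L(x)\ge \frac{\partial L}{\partial x_1}(x)h_1+\frac{\partial L}{\partial x_2}(x)h_2$; it is strictly convex if, in addition, equality holds only when $h=0$. *)

theory Defs
  imports "HOL-Analysis.Analysis"
begin

definition C1_on :: "(real \<times> real) set \<Rightarrow> (real \<times> real \<Rightarrow> real)
    \<Rightarrow> (real \<times> real \<Rightarrow> real) \<Rightarrow> (real \<times> real \<Rightarrow> real) \<Rightarrow> bool" where
  "C1_on Om L Lx Ly \<longleftrightarrow>
     (\<forall>p\<in>Om. (L has_derivative (\<lambda>h. Lx p * fst h + Ly p * snd h)) (at p))
     \<and> continuous_on Om Lx \<and> continuous_on Om Ly"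

definition convex_L :: "(real \<times> real) set \<Rightarrow> (real \<times> real \<Rightarrow> real)
    \<Rightarrow> (real \<times> real \<Rightarrow> real) \<Rightarrow> (real \<times> real \<Rightarrow> real) \<Rightarrow> bool" where
  "convex_L Om L Lx Ly \<longleftrightarrow>
     (\<forall>x\<in>Om. \<forall>h. x + h \<in> Om \<longrightarrow>
        L (x + h) - L x \<ge> Lx x * fst h + Ly x * snd h)"

definition strictly_convex_L :: "(real \<times> real) set \<Rightarrow> (real \<times> real \<Rightarrow> real)
    \<Rightarrow> (real \<times> real \<Rightarrow> real) \<Rightarrow> (real \<times> real \<Rightarrow> real) \<Rightarrow> bool" where
  "strictly_convex_L Om L Lx Ly \<longleftrightarrow> convex_L Om L Lx Ly \<and>
     (\<forall>x\<in>Om. \<forall>h. x + h \<in> Om \<longrightarrow>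
        L (x + h) - L x = Lx x * fst h + Ly x * snd h \<longrightarrow> h = 0)"

definition dgam :: "real \<Rightarrow> real \<Rightarrow> (real \<Rightarrow> real) \<Rightarrow> real \<Rightarrow> real" where
  "dgam a b \<gamma> t = vector_derivative \<gamma> (at t within {a<..b})"

definition improper_int_has :: "real \<Rightarrow> real \<Rightarrow> (real \<Rightarrow> real) \<Rightarrow> real \<Rightarrow> bool" where
  "improper_int_has a b f I \<longleftrightarrow> ((\<lambda>s. integral {s..b} f) \<longlongrightarrow> I) (at_right a)"

definition action :: "real \<Rightarrow> real \<Rightarrow> (real \<times> real \<Rightarrow> real) \<Rightarrow> (real \<Rightarrow> real) \<Rightarrow> real" where
  "action a b L \<gamma> = Lim (at_right a) (\<lambda>s. integral {s..b} (\<lambda>t. L (\<gamma> t, dgam a b \<gamma> t)))"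

definition admissible :: "real \<Rightarrow> real \<Rightarrow> real \<Rightarrow> real \<Rightarrow> (real \<times> real) set
    \<Rightarrow> (real \<times> real \<Rightarrow> real) \<Rightarrow> (real \<Rightarrow> real) set" where
  "admissible a b \<alpha> \<beta> Om L = {\<gamma>.
     continuous_on {a..b} \<gamma>
     \<and> (\<forall>t\<in>{a<..b}. \<gamma> differentiable (at t within {a<..b}))
     \<and> continuous_on {a<..b} (dgam a b \<gamma>)
     \<and> (\<forall>t\<in>{a<..b}. (\<gamma> t, dgam a b \<gamma> t) \<in> Om)
     \<and> \<gamma> a = \<alpha> \<and> \<gamma> b = \<beta>
     \<and> (\<exists>I. improper_int_has a b (\<lambda>t. L (\<gamma> t, dgam a b \<gamma> t)) I)}"

end

theory Submission
  imports Defs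
begin

lemma adm_facts:
  assumes C1: "C1_on Om L Lx Ly" and ab: "a < b"
    and eta: "\<eta> \<in> admissible a b \<alpha> \<beta> Om L"
  shows "\<forall>t\<in>{a<..b}. (\<eta> has_real_derivative dgam a b \<eta> t) (at t within {a<..b})"
    and "\<forall>s\<in>{a<..b}. continuous_on {s..b} (\<lambda>t. L (\<eta> t, dgam a b \<eta> t))"
    and "((\<lambda>s. integral {s..b} (\<lambda>t. L (\<eta> t, dgam a b \<eta> t))) \<longlongrightarrow> action a b L \<eta>) (at_right a)"
proof -
  from eta have e: "continuous_on {a..b} \<eta>"
     "\<forall>t\<in>{a<..b}. \<eta> differentiable (at t within {a<..b})"
     "continuous_on {a<..b} (dgam a b \<eta>)"
     "\<forall>t\<in>{a<..b}. (\<eta> t, dgam a b \<eta> t) \<in> Om"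
     "\<exists>I. improper_int_has a b (\<lambda>t. L (\<eta> t, dgam a b \<eta> t)) I"
    unfolding admissible_def by auto
  show "\<forall>t\<in>{a<..b}. (\<eta> has_real_derivative dgam a b \<eta> t) (at t within {a<..b})"
    using e(2) unfolding dgam_def
    by (simp add: vector_derivative_works has_real_derivative_iff_has_vector_derivative)
  have contL: "continuous_on Om L"
    using C1 unfolding C1_on_def
    by (meson continuous_at_imp_continuous_on has_derivative_continuous)
  show "\<forall>s\<in>{a<..b}. continuous_on {s..b} (\<lambda>t. L (\<eta> t, dgam a b \<eta> t))"
  proof
    fix s assume s: "s \<in> {a<..b}"
    have "continuous_on {s..b} (\<lambda>t. (\<eta> t, dgam a b \<eta> t))"
      apply (rule continuous_on_Pair)
      using s e(1) e(3) by (auto intro: continuous_on_subset)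
    moreover have "(\<lambda>t. (\<eta> t, dgam a b \<eta> t)) ` {s..b} \<subseteq> Om" using s e(4) by auto
    ultimately show "continuous_on {s..b} (\<lambda>t. L (\<eta> t, dgam a b \<eta> t))"
      using continuous_on_compose2[OF contL] by blast
  qed
  from e(5) obtain I where I: "((\<lambda>s. integral {s..b} (\<lambda>t. L (\<eta> t, dgam a b \<eta> t))) \<longlongrightarrow> I) (at_right a)"
    unfolding improper_int_has_def by auto
  then have "action a b L \<eta> = I" unfolding action_def
    by (simp add: tendsto_Lim)
  with I show "((\<lambda>s. integral {s..b} (\<lambda>t. L (\<eta> t, dgam a b \<eta> t))) \<longlongrightarrow> action a b L \<eta>) (at_right a)"
    by simp
qed


theorem proposition2:
  fixes c :: real and d :: ereal and J :: "real set"
    and L Lx Ly :: "real \<times> real \<Rightarrow> real"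
    and a b \<alpha> \<beta> :: real and \<gamma> :: "real \<Rightarrow> real"
  assumes cd: "ereal c < d"
    and J: "is_interval J" "open J" "J \<noteq> {}"
    and O_def: "Om = {x. c < x \<and> ereal x < d} \<times> J"
    and C1: "C1_on Om L Lx Ly"
    and ab: "a < b"
    and Ly_bdd: "\<exists>M. \<forall>p\<in>Om. \<bar>Ly p\<bar> \<le> M"
    and conv: "convex_L Om L Lx Ly"
    and gam: "\<gamma> \<in> admissible a b \<alpha> \<beta> Om L"
    and EL: "\<forall>t\<in>{a<..b}.
       ((\<lambda>s. Ly (\<gamma> s, dgam a b \<gamma> s)) has_real_derivative Lx (\<gamma> t, dgam a b \<gamma> t))
         (at t within {a<..b})"
  shows "(\<forall>\<eta>\<in>admissible a b \<alpha> \<beta> Om L. action a b L \<gamma> \<le> action a b L \<eta>)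
    \<and> (strictly_convex_L Om L Lx Ly \<longrightarrow>
         (\<forall>\<eta>\<in>admissible a b \<alpha> \<beta> Om L. action a b L \<eta> \<le> action a b L \<gamma>
              \<longrightarrow> (\<forall>t\<in>{a..b}. \<eta> t = \<gamma> t)))"
proof -
  obtain M where M: "\<forall>p\<in>Om. \<bar>Ly p\<bar> \<le> M" using Ly_bdd by auto
  define g' where "g' = dgam a b \<gamma>"
  have gA: "continuous_on {a..b} \<gamma>" "continuous_on {a<..b} g'"
     "\<forall>t\<in>{a<..b}. (\<gamma> t, g' t) \<in> Om" "\<gamma> a = \<alpha>" "\<gamma> b = \<beta>"
    using gam unfolding admissible_def g'_def by auto
  note gF = adm_facts[OF C1 ab gam, folded g'_def]
  have contLx: "continuous_on Om Lx" and contLy: "continuous_on Om Ly"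
    using C1 unfolding C1_on_def by auto
  have key: "\<exists>G. (\<forall>s\<in>{a<..b}. (G has_integral
         (integral {s..b} (\<lambda>t. L (\<eta> t, dgam a b \<eta> t)) - integral {s..b} (\<lambda>t. L (\<gamma> t, g' t))
          + Ly (\<gamma> s, g' s) * (\<eta> s - \<gamma> s))) {s..b} \<and> continuous_on {s..b} G)
       \<and> (\<forall>t\<in>{a<..b}. G t \<ge> 0)
       \<and> (\<forall>t\<in>{a<..b}. G t = 0 \<longrightarrow> strictly_convex_L Om L Lx Ly \<longrightarrow> \<eta> t = \<gamma> t)
       \<and> ((\<lambda>s. integral {s..b} (\<lambda>t. L (\<eta> t, dgam a b \<eta> t)) - integral {s..b} (\<lambda>t. L (\<gamma> t, g' t))
          + Ly (\<gamma> s, g' s) * (\<eta> s - \<gamma> s)) \<longlongrightarrow> action a b L \<eta> - action a b L \<gamma> + 0) (at_right a)"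
    if eta: "\<eta> \<in> admissible a b \<alpha> \<beta> Om L" for \<eta>
  proof -
    define e' where "e' = dgam a b \<eta>"
    have eA: "continuous_on {a..b} \<eta>" "continuous_on {a<..b} e'"
       "\<forall>t\<in>{a<..b}. (\<eta> t, e' t) \<in> Om" "\<eta> a = \<alpha>" "\<eta> b = \<beta>"
      using eta unfolding admissible_def e'_def by auto
    note eF = adm_facts[OF C1 ab eta, folded e'_def]
    define G where "G t = L (\<eta> t, e' t) - L (\<gamma> t, g' t)
        - (Lx (\<gamma> t, g' t) * (\<eta> t - \<gamma> t) + Ly (\<gamma> t, g' t) * (e' t - g' t))" for t
    define P where "P t = Ly (\<gamma> t, g' t) * (\<eta> t - \<gamma> t)" for t
    define P' where "P' t = Lx (\<gamma> t, g' t) * (\<eta> t - \<gamma> t) + Ly (\<gamma> t, g' t) * (e' t - g' t)" for t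
    have dP: "(P has_real_derivative P' t) (at t within {a<..b})" if t: "t \<in> {a<..b}" for t
    proof -
      have "((\<lambda>t. \<eta> t - \<gamma> t) has_real_derivative e' t - g' t) (at t within {a<..b})"
        using eF(1) gF(1) t by (intro DERIV_diff) auto
      from DERIV_mult[OF EL[rule_format, OF t, folded g'_def] this]
      show ?thesis unfolding P_def P'_def by (rule DERIV_cong) (simp add: algebra_simps)
    qed
    have contP': "continuous_on {s..b} P'" if s: "s \<in> {a<..b}" for s
    proof -
      have cp: "continuous_on {s..b} (\<lambda>t. (\<gamma> t, g' t))"
        apply (rule continuous_on_Pair)
        using s gA by (auto intro: continuous_on_subset)
      have im: "(\<lambda>t. (\<gamma> t, g' t)) ` {s..b} \<subseteq> Om" using s gA(3) by auto
      have c1: "continuous_on {s..b} (\<lambda>t. Lx (\<gamma> t, g' t))"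
        using continuous_on_compose2[OF contLx cp im] .
      have c2: "continuous_on {s..b} (\<lambda>t. Ly (\<gamma> t, g' t))"
        using continuous_on_compose2[OF contLy cp im] .
      have c3: "continuous_on {s..b} \<eta>" "continuous_on {s..b} \<gamma>"
          "continuous_on {s..b} e'" "continuous_on {s..b} g'"
        using s gA eA by (auto intro: continuous_on_subset)
      show ?thesis unfolding P'_def
        by (intro continuous_intros c1 c2 c3)
    qed
    have Gint: "(G has_integral
         (integral {s..b} (\<lambda>t. L (\<eta> t, e' t)) - integral {s..b} (\<lambda>t. L (\<gamma> t, g' t))
          + P s)) {s..b} \<and> continuous_on {s..b} G" if s: "s \<in> {a<..b}" for s
    proof -
      have ftc: "(P' has_integral (P b - P s)) {s..b}"
      proof (rule fundamental_theorem_of_calculus)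
        show "s \<le> b" using s by auto
        fix x assume "x \<in> {s..b}"
        then have "x \<in> {a<..b}" using s by auto
        have "{s..b} \<subseteq> {a<..b}" using s by auto
        from DERIV_subset[OF dP[OF \<open>x \<in> {a<..b}\<close>] this]
        show "(P has_vector_derivative P' x) (at x within {s..b})"
          by (simp add: has_real_derivative_iff_has_vector_derivative)
      qed
      have Pb: "P b = 0" unfolding P_def using eA(5) gA(5) by simp
      have i1: "((\<lambda>t. L (\<eta> t, e' t)) has_integral integral {s..b} (\<lambda>t. L (\<eta> t, e' t))) {s..b}"
        using eF(2) s by (auto intro!: integrable_integral integrable_continuous_interval)
      have i2: "((\<lambda>t. L (\<gamma> t, g' t)) has_integral integral {s..b} (\<lambda>t. L (\<gamma> t, g' t))) {s..b}"
        using gF(2) s by (auto intro!: integrable_integral integrable_continuous_interval)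
      have "(G has_integral
         (integral {s..b} (\<lambda>t. L (\<eta> t, e' t)) - integral {s..b} (\<lambda>t. L (\<gamma> t, g' t))
          - (P b - P s))) {s..b}"
        unfolding G_def using has_integral_diff[OF has_integral_diff[OF i1 i2] ftc]
        by (simp add: P'_def)
      moreover have "continuous_on {s..b} G"
      proof -
        have "continuous_on {s..b} (\<lambda>t. L (\<eta> t, e' t) - L (\<gamma> t, g' t) - P' t)"
          using eF(2) gF(2) contP'[OF s] s by (intro continuous_intros) auto
        then show ?thesis by (simp add: G_def P'_def)
      qed
      ultimately show ?thesis using Pb by simp
    qed
    have Gpos: "G t \<ge> 0" if t: "t \<in> {a<..b}" for t
    proof -
      have "L ((\<gamma> t, g' t) + (\<eta> t - \<gamma> t, e' t - g' t)) - L (\<gamma> t, g' t) \<ge>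
          Lx (\<gamma> t, g' t) * fst (\<eta> t - \<gamma> t, e' t - g' t) + Ly (\<gamma> t, g' t) * snd (\<eta> t - \<gamma> t, e' t - g' t)"
      proof -
        have pe: "(\<gamma> t, g' t) + (\<eta> t - \<gamma> t, e' t - g' t) = (\<eta> t, e' t)" by simp
        have "(\<gamma> t, g' t) \<in> Om" "(\<gamma> t, g' t) + (\<eta> t - \<gamma> t, e' t - g' t) \<in> Om"
          using gA(3) eA(3) t pe by auto
        then show ?thesis using conv unfolding convex_L_def by blast
      qed
      then show ?thesis by (simp add: G_def)
    qed
    have Gzero: "\<eta> t = \<gamma> t" if t: "t \<in> {a<..b}" and G0: "G t = 0" and sc: "strictly_convex_L Om L Lx Ly" for t
    proof -
      have "L ((\<gamma> t, g' t) + (\<eta> t - \<gamma> t, e' t - g' t)) - L (\<gamma> t, g' t) =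
          Lx (\<gamma> t, g' t) * fst (\<eta> t - \<gamma> t, e' t - g' t) + Ly (\<gamma> t, g' t) * snd (\<eta> t - \<gamma> t, e' t - g' t)"
        using G0 by (simp add: G_def)
      moreover have pe: "(\<gamma> t, g' t) + (\<eta> t - \<gamma> t, e' t - g' t) = (\<eta> t, e' t)" by simp
      moreover have "(\<gamma> t, g' t) \<in> Om" "(\<gamma> t, g' t) + (\<eta> t - \<gamma> t, e' t - g' t) \<in> Om"
          using gA(3) eA(3) t pe by auto
      ultimately have "(\<eta> t - \<gamma> t, e' t - g' t) = 0"
        using sc unfolding strictly_convex_L_def by blast
      then show ?thesis by (simp add: zero_prod_def)
    qed
    have Plim: "(P \<longlongrightarrow> 0) (at_right a)"
    proof (rule tendsto_0_le)
      have "continuous_on {a..b} (\<lambda>t. \<eta> t - \<gamma> t)" using eA(1) gA(1) by (intro continuous_intros)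
      then have "((\<lambda>t. \<eta> t - \<gamma> t) \<longlongrightarrow> \<eta> a - \<gamma> a) (at a within {a..b})"
        using ab by (simp add: continuous_on_def)
      then show "((\<lambda>t. \<eta> t - \<gamma> t) \<longlongrightarrow> 0) (at_right a)"
        using eA(4) gA(4) ab by (simp add: at_within_Icc_at_right)
      have "eventually (\<lambda>t. t \<in> {a<..b}) (at_right a)"
        using ab eventually_at_right_field by fastforce
      then show "eventually (\<lambda>t. norm (P t) \<le> norm (\<eta> t - \<gamma> t) * M) (at_right a)"
      proof (rule eventually_mono)
        fix t assume "t \<in> {a<..b}"
        then have LM: "\<bar>Ly (\<gamma> t, g' t)\<bar> \<le> M" using M gA(3) by auto
        show "norm (P t) \<le> norm (\<eta> t - \<gamma> t) * M"
          using mult_right_mono[OF LM abs_ge_zero[of "\<eta> t - \<gamma> t"]]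
          by (simp add: P_def abs_mult mult.commute)
      qed
    qed
    have "((\<lambda>s. integral {s..b} (\<lambda>t. L (\<eta> t, e' t)) - integral {s..b} (\<lambda>t. L (\<gamma> t, g' t))
          + P s) \<longlongrightarrow> action a b L \<eta> - action a b L \<gamma> + 0) (at_right a)"
      by (rule tendsto_add[OF tendsto_diff[OF eF(3) gF(3)] Plim])
    then show ?thesis
      unfolding e'_def[symmetric] P_def[symmetric]
      apply (intro exI[of _ G] conjI)
      subgoal using Gint by blast
      subgoal using Gpos by blast
      subgoal using Gzero by blast
      subgoal by assumption
      done
  qed
  have ev: "eventually (\<lambda>s. s \<in> {a<..b}) (at_right a)"
    unfolding eventually_at_right_field using ab by (intro exI[of _ b]) auto
  have ntl: "\<not> trivial_limit (at_right a)" by (rule trivial_limit_at_right_real)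
  show ?thesis
  proof safe
    fix \<eta> assume eta: "\<eta> \<in> admissible a b \<alpha> \<beta> Om L"
    define V where "V s = integral {s..b} (\<lambda>t. L (\<eta> t, dgam a b \<eta> t)) - integral {s..b} (\<lambda>t. L (\<gamma> t, g' t))
          + Ly (\<gamma> s, g' s) * (\<eta> s - \<gamma> s)" for s
    from key[OF eta, folded V_def] obtain G where G: "\<forall>s\<in>{a<..b}. (G has_integral V s) {s..b} \<and> continuous_on {s..b} G"
       "\<forall>t\<in>{a<..b}. G t \<ge> 0"
       "\<forall>t\<in>{a<..b}. G t = 0 \<longrightarrow> strictly_convex_L Om L Lx Ly \<longrightarrow> \<eta> t = \<gamma> t"
       and lim: "(V \<longlongrightarrow> action a b L \<eta> - action a b L \<gamma> + 0) (at_right a)"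
      by blast
    have Ghas: "(G has_integral V s) {s..b}" and Gc: "continuous_on {s..b} G"
      if "s \<in> {a<..b}" for s
      using G(1) that by blast+
    have Gi: "G integrable_on {s..b}" if "s \<in> {a<..b}" for s
      using Ghas[OF that] by (rule has_integral_integrable)
    have Vint: "integral {s..b} G = V s" if "s \<in> {a<..b}" for s
      using Ghas[OF that] by (rule integral_unique)
    have Vpos: "V s \<ge> 0" if s: "s \<in> {a<..b}" for s
    proof -
      have "integral {s..b} G \<ge> 0"
      proof (rule integral_nonneg[OF Gi[OF s]])
        fix x assume "x \<in> {s..b}"
        then have "x \<in> {a<..b}" using s by auto
        then show "0 \<le> G x" using G(2) by blast
      qed
      then show ?thesis using Vint[OF s] by simp
    qed
    have limV: "(V \<longlongrightarrow> action a b L \<eta> - action a b L \<gamma>) (at_right a)"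
      using lim by simp
    have "0 \<le> action a b L \<eta> - action a b L \<gamma>"
    proof (rule tendsto_lowerbound[OF limV _ ntl])
      show "eventually (\<lambda>i. 0 \<le> V i) (at_right a)"
        using ev by (rule eventually_mono) (rule Vpos)
    qed
    then show "action a b L \<gamma> \<le> action a b L \<eta>" by simp
    assume sc: "strictly_convex_L Om L Lx Ly"
      and le: "action a b L \<eta> \<le> action a b L \<gamma>"
    fix t assume t: "t \<in> {a..b}"
    show "\<eta> t = \<gamma> t"
    proof (cases "t = a")
      case True
      then show ?thesis using eta gam unfolding admissible_def by auto
    next
      case False
      with t have t': "t \<in> {a<..b}" by auto
      define s where "s = (a + t) / 2"
      have s: "s \<in> {a<..b}" "s < t" "a < s" "s \<le> b" using t' ab unfolding s_def by auto
      have "V s \<le> action a b L \<eta> - action a b L \<gamma>"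
      proof (rule tendsto_lowerbound[OF limV _ ntl])
        have "eventually (\<lambda>r. r \<in> {a<..<s}) (at_right a)"
          unfolding eventually_at_right_field using s by (intro exI[of _ s]) auto
        then show "eventually (\<lambda>r. V s \<le> V r) (at_right a)"
        proof (rule eventually_mono)
          fix r assume r: "r \<in> {a<..<s}"
          then have rb: "r \<in> {a<..b}" using s by auto
          have rs: "r \<le> s" using r by auto
          have "integral {r..s} G + integral {s..b} G = integral {r..b} G"
            by (rule Henstock_Kurzweil_Integration.integral_combine[OF rs s(4) Gi[OF rb]])
          moreover have "integral {r..s} G \<ge> 0"
          proof (rule integral_nonneg)
            show "G integrable_on {r..s}"
              by (rule integrable_subinterval_real[OF Gi[OF rb]]) (use s in auto)
          next
            fix x assume "x \<in> {r..s}"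
            then have "x \<in> {a<..b}" using r s by auto
            then show "0 \<le> G x" using G(2) by blast
          qed
          ultimately show "V s \<le> V r" using Vint[OF rb] Vint[OF s(1)] by simp
        qed
      qed
      then have Vs0: "V s = 0" using le Vpos[OF s(1)] by simp
      have c: "continuous_on (cbox s b) G" using Gc[OF s(1)] by simp
      have ne: "box s b \<noteq> {}" using s t' by auto
      have nn: "\<And>x. x \<in> cbox s b \<Longrightarrow> G x \<ge> 0"
      proof -
        fix x assume "x \<in> cbox s b"
        then have "x \<in> {a<..b}" using s by auto
        then show "0 \<le> G x" using G(2) by blast
      qed
      have "integral (cbox s b) G = 0" using Vint[OF s(1)] Vs0 by simp
      then have "\<forall>x\<in>cbox s b. G x = 0" using integral_cbox_eq_0_iff[OF c ne nn] by blast
      then have "G t = 0" using s t' by auto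
      then show ?thesis using G(3) t' sc by blast
    qed
  qed
qed

end
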